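(* Let $\mathbb F\subseteq\mathbb R$ be a subfield and $X\subseteq\mathbb F^n$ such that $\operatorname{conv}_{\mathbb R}(X\cup\{0\})$ is a polyhedron. Then a nonempty subset $Y\subseteq X$ is a positive weak $\mathbb F$-face of $X$ if and only if there is a linear functional $\varphi\in(\mathbb R^n)^*$ which attains a maximum $M>0$ on $X$ with $Y=\{x\in X:\varphi(x)=M\}$. In particular, if $0$ lies in the relative interior of $\operatorname{conv}_{\mathbb R}(X)$, then a subset $Y\subseteq X$ is a positive weak $\mathbb F$-face of $X$ if and only if $Y\ne X$ and $Y$ is a weak $\mathbb F$-face of $X$.
   Context: $\operatorname{conv}_{\mathbb K}(X)$ ($\mathbb K=\mathbb F$ or $\mathbb R$) is the set of finite combinations $\sum r_sx_s$ with $x_s\in X$, $r_s\in\mathbb K\cap[0,\infty)$, $\sum r_s=1$; for $Y=\operatorname{conv}_{\mathbb K}(X)$, $\operatorname{relint}_{\mathbb K}(Y)=\{x\in Y:\forall y\in Y\ \exists z\in Y,\ t\in\mathbb K\cap(0,1),\ x=ty+(1-t)z\}$ (for $\mathbb K=\mathbb R$ and a polyhedron this is the usual relative interior). $Y\subseteq X$ is a weak $\mathbb F$-face of $X$ if for every $U\subseteq X$, $\operatorname{conv}_{\mathbb F}(Y)\cap\operatorname{relint}_{\mathbb F}(\operatorname{conv}_{\mathbb F}(U))\ne\emptyset$ implies $U\subseteq Y$; a weak $\mathbb F$-face $Y$ is a positive weak $\mathbb F$-face if for every $U\subseteq X$, $\operatorname{conv}_{\mathbb F}(Y)\cap\operatorname{relint}_{\mathbb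 F}(\operatorname{conv}_{\mathbb F}(U\cup\{0\}))=\emptyset$. A polyhedron is a finite intersection of closed affine half-spaces. *)

theory Defs
  imports "HOL-Analysis.Analysis"
begin

definition real_subfield :: "real set \<Rightarrow> bool" where
  "real_subfield F \<longleftrightarrow> 0 \<in> F \<and> 1 \<in> F \<and>
     (\<forall>a\<in>F. \<forall>b\<in>F. a + b \<in> F \<and> a - b \<in> F \<and> a * b \<in> F) \<and>
     (\<forall>a\<in>F. a \<noteq> 0 \<longrightarrow> inverse a \<in> F)"

definition coords_in :: "real set \<Rightarrow> (real ^ 'n) set" where
  "coords_in F = {x. \<forall>i. x $ i \<in> F}"

definition conv_K :: "real set \<Rightarrow> ('a::real_vector) set \<Rightarrow> 'a set" where
  "conv_K K X = {x. \<exists>S r. finite S \<and> S \<subseteq> X \<and> (\<forall>s\<in>S. r s \<in> K \<and> 0 \<le> r s) \<and>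
       sum r S = 1 \<and> x = (\<Sum>s\<in>S. r s *\<^sub>R s)}"

definition relint_K :: "real set \<Rightarrow> ('a::real_vector) set \<Rightarrow> 'a set" where
  "relint_K K Y = {x \<in> Y. \<forall>y\<in>Y. \<exists>z\<in>Y. \<exists>t. t \<in> K \<and> 0 < t \<and> t < 1 \<and>
       x = t *\<^sub>R y + (1 - t) *\<^sub>R z}"

definition weak_face :: "real set \<Rightarrow> ('a::real_vector) set \<Rightarrow> 'a set \<Rightarrow> bool" where
  "weak_face F Y X \<longleftrightarrow> Y \<subseteq> X \<and>
     (\<forall>U. U \<subseteq> X \<longrightarrow> conv_K F Y \<inter> relint_K F (conv_K F U) \<noteq> {} \<longrightarrow> U \<subseteq> Y)"

definition positive_weak_face :: "real set \<Rightarrow> ('a::real_vector) set \<Rightarrow> 'a set \<Rightarrow> bool" where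
  "positive_weak_face F Y X \<longleftrightarrow> weak_face F Y X \<and>
     (\<forall>U. U \<subseteq> X \<longrightarrow> conv_K F Y \<inter> relint_K F (conv_K F (U \<union> {0})) = {})"

end

theory Submission
  imports Defs
begin


lemma sf_0: "real_subfield F \<Longrightarrow> 0 \<in> F" by (simp add: real_subfield_def)
lemma sf_1: "real_subfield F \<Longrightarrow> 1 \<in> F" by (simp add: real_subfield_def)
lemma sf_add: "real_subfield F \<Longrightarrow> a \<in> F \<Longrightarrow> b \<in> F \<Longrightarrow> a + b \<in> F" by (simp add: real_subfield_def)
lemma sf_diff: "real_subfield F \<Longrightarrow> a \<in> F \<Longrightarrow> b \<in> F \<Longrightarrow> a - b \<in> F" by (simp add: real_subfield_def)
lemma sf_mult: "real_subfield F \<Longrightarrow> a \<in> F \<Longrightarrow> b \<in> F \<Longrightarrow> a * b \<in> F" by (simp add: real_subfield_def)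
lemma sf_inverse: "real_subfield F \<Longrightarrow> a \<in> F \<Longrightarrow> inverse a \<in> F"
  by (cases "a = 0") (auto simp add: real_subfield_def)
lemma sf_divide: "real_subfield F \<Longrightarrow> a \<in> F \<Longrightarrow> b \<in> F \<Longrightarrow> a / b \<in> F"
  by (simp add: divide_inverse sf_mult sf_inverse)
lemma sf_uminus: "real_subfield F \<Longrightarrow> a \<in> F \<Longrightarrow> - a \<in> F"
  using sf_diff[of F 0 a] sf_0 by simp
lemma sf_sum: "real_subfield F \<Longrightarrow> (\<And>t. t \<in> T \<Longrightarrow> f t \<in> F) \<Longrightarrow> sum f T \<in> F"
  by (induction T rule: infinite_finite_induct) (auto simp: sf_0 sf_add)
lemma sf_of_nat: "real_subfield F \<Longrightarrow> real n \<in> F"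
  by (induction n) (auto simp: sf_0 sf_1 sf_add)
lemma sf_of_int: "real_subfield F \<Longrightarrow> real_of_int i \<in> F"
  using sf_uminus[OF _ sf_1, of F]
  by (cases i rule: int_cases) (auto simp: sf_of_nat sf_uminus intro!: sf_diff sf_1)
lemma sf_Rats: "real_subfield F \<Longrightarrow> r \<in> \<rat> \<Longrightarrow> r \<in> F"
  by (auto elim!: Rats_cases' simp: sf_divide sf_of_int)

lemma F_approx_aux:
  assumes F: "real_subfield F" and T: "finite T"
  shows "\<And>v c \<epsilon>. (\<forall>k\<in>K. \<forall>t\<in>T. v k t \<in> F) \<Longrightarrow> (\<forall>k\<in>K. (\<Sum>t\<in>T. c t * v k t) = 0) \<Longrightarrow> \<epsilon> > 0
     \<Longrightarrow> \<exists>d. (\<forall>t\<in>T. d t \<in> F \<and> \<bar>d t - c t\<bar> < \<epsilon>) \<and> (\<forall>k\<in>K. (\<Sum>t\<in>T. d t * v k t) = 0)"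
  using T
proof (induction T rule: finite_induct)
  case empty
  then show ?case by auto
next
  case (insert t0 T v c \<epsilon>)
  show ?case
  proof (cases "\<forall>k\<in>K. v k t0 = 0")
    case True
    have "\<forall>k\<in>K. (\<Sum>t\<in>T. c t * v k t) = 0"
      using insert.prems(2) True insert.hyps by simp
    then obtain d where d: "\<forall>t\<in>T. d t \<in> F \<and> \<bar>d t - c t\<bar> < \<epsilon>" "\<forall>k\<in>K. (\<Sum>t\<in>T. d t * v k t) = 0"
      using insert.IH[of v c \<epsilon>] insert.prems by auto
    obtain r where r: "r \<in> \<rat>" "c t0 - \<epsilon> < r" "r < c t0 + \<epsilon>"
      using Rats_dense_in_real[of "c t0 - \<epsilon>" "c t0 + \<epsilon>"] insert.prems by auto
    define d' where "d' = d(t0 := r)"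
    have "\<forall>t\<in>T. d' t = d t" using insert.hyps by (auto simp: d'_def)
    then have s: "(\<Sum>t\<in>T. d' t * v k t) = (\<Sum>t\<in>T. d t * v k t)" for k by (intro sum.cong) auto
    have A1: "\<forall>t\<in>insert t0 T. d' t \<in> F \<and> \<bar>d' t - c t\<bar> < \<epsilon>"
    proof
      fix t assume "t \<in> insert t0 T"
      then show "d' t \<in> F \<and> \<bar>d' t - c t\<bar> < \<epsilon>"
        using d r sf_Rats[OF F] by (auto simp: d'_def)
    qed
    have A2: "\<forall>k\<in>K. (\<Sum>t\<in>insert t0 T. d' t * v k t) = 0"
    proof
      fix k assume "k \<in> K"
      then show "(\<Sum>t\<in>insert t0 T. d' t * v k t) = 0"
        using insert.hyps s[of k] d True by simp
    qed
    show ?thesis using A1 A2 by blast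
  next
    case False
    then obtain k0 where k0: "k0 \<in> K" "v k0 t0 \<noteq> 0" by auto
    define a where "a = v k0 t0"
    define v' where "v' = (\<lambda>k t. v k t - v k0 t * v k t0 / a)"
    have v'F: "\<forall>k\<in>K. \<forall>t\<in>T. v' k t \<in> F"
      using insert.prems(1) k0 by (auto simp: v'_def a_def intro!: sf_diff[OF F] sf_mult[OF F] sf_divide[OF F])
    have ct0: "c t0 = - (\<Sum>t\<in>T. c t * v k0 t) / a"
    proof -
      have "c t0 * a + (\<Sum>t\<in>T. c t * v k0 t) = 0"
        using insert.prems(2) k0 insert.hyps by (simp add: a_def)
      then show ?thesis using k0 by (simp add: a_def field_simps)
    qed
    have sol': "\<forall>k\<in>K. (\<Sum>t\<in>T. c t * v' k t) = 0"
    proof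
      fix k assume k: "k \<in> K"
      have "(\<Sum>t\<in>T. c t * v' k t) = (\<Sum>t\<in>T. c t * v k t) - (\<Sum>t\<in>T. c t * v k0 t) * v k t0 / a"
        by (simp add: v'_def sum_subtractf right_diff_distrib sum_divide_distrib sum_distrib_right mult.assoc)
      also have "\<dots> = (\<Sum>t\<in>T. c t * v k t) + c t0 * v k t0"
      proof -
        have a0: "a \<noteq> 0" using k0 by (simp add: a_def)
        have "(\<Sum>t\<in>T. c t * v k0 t) = - (c t0 * a)" using ct0 a0 by (simp add: field_simps)
        then show ?thesis using a0 by simp
      qed
      also have "\<dots> = 0" using insert.prems(2) k insert.hyps by (simp add: add.commute)
      finally show "(\<Sum>t\<in>T. c t * v' k t) = 0" .
    qed
    define B where "B = (\<Sum>t\<in>T. \<bar>v k0 t\<bar>) / \<bar>a\<bar>"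
    have B0: "B \<ge> 0" by (simp add: B_def sum_nonneg)
    define \<epsilon>' where "\<epsilon>' = \<epsilon> / (1 + B)"
    have e': "\<epsilon>' > 0" "\<epsilon>' \<le> \<epsilon>" "\<epsilon>' * B < \<epsilon>"
      using insert.prems(3) B0 by (auto simp: \<epsilon>'_def field_simps)
    obtain d where d: "\<forall>t\<in>T. d t \<in> F \<and> \<bar>d t - c t\<bar> < \<epsilon>'" "\<forall>k\<in>K. (\<Sum>t\<in>T. d t * v' k t) = 0"
      using insert.IH[OF v'F sol' e'(1)] by auto
    define d' where "d' = d(t0 := - (\<Sum>t\<in>T. d t * v k0 t) / a)"
    have eqT: "\<forall>t\<in>T. d' t = d t" using insert.hyps by (auto simp: d'_def)
    then have s: "(\<Sum>t\<in>T. d' t * v k t) = (\<Sum>t\<in>T. d t * v k t)" for k by (intro sum.cong) auto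
    have d't0: "d' t0 - c t0 = - (\<Sum>t\<in>T. (d t - c t) * v k0 t) / a"
      by (simp add: d'_def ct0 sum_subtractf left_diff_distrib diff_divide_distrib)
    have "\<bar>d' t0 - c t0\<bar> = \<bar>\<Sum>t\<in>T. (d t - c t) * v k0 t\<bar> / \<bar>a\<bar>"
      by (simp add: d't0)
    also have "\<dots> \<le> (\<Sum>t\<in>T. \<epsilon>' * \<bar>v k0 t\<bar>) / \<bar>a\<bar>"
    proof (intro divide_right_mono order.trans[OF sum_abs] sum_mono)
      fix t assume "t \<in> T"
      then show "\<bar>(d t - c t) * v k0 t\<bar> \<le> \<epsilon>' * \<bar>v k0 t\<bar>"
        using d(1) by (auto simp: abs_mult intro!: mult_right_mono)
    qed simp
    also have "\<dots> = \<epsilon>' * B" by (simp add: B_def sum_distrib_left)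
    also have "\<dots> < \<epsilon>" by (rule e'(3))
    finally have t0ok: "\<bar>d' t0 - c t0\<bar> < \<epsilon>" .
    have A1: "\<forall>t\<in>insert t0 T. d' t \<in> F \<and> \<bar>d' t - c t\<bar> < \<epsilon>"
    proof
      fix t assume t: "t \<in> insert t0 T"
      show "d' t \<in> F \<and> \<bar>d' t - c t\<bar> < \<epsilon>"
      proof (cases "t = t0")
        case True
        have "d' t0 \<in> F"
          using d(1) insert.prems(1) k0
          by (auto simp: d'_def a_def intro!: sf_divide[OF F] sf_uminus[OF F] sf_sum[OF F] sf_mult[OF F])
        then show ?thesis using True t0ok by simp
      next
        case False
        then show ?thesis using t d(1) e' eqT by fastforce
      qed
    qed
    have A2: "\<forall>k\<in>K. (\<Sum>t\<in>insert t0 T. d' t * v k t) = 0"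
    proof
      fix k assume k: "k \<in> K"
      have "(\<Sum>t\<in>insert t0 T. d' t * v k t) = (\<Sum>t\<in>T. d t * v k t) + d' t0 * v k t0"
        using insert.hyps s[of k] by (simp add: add.commute)
      also have "\<dots> = (\<Sum>t\<in>T. d t * v' k t)"
      proof -
        have e1: "(\<Sum>t\<in>T. d t * v' k t) = (\<Sum>t\<in>T. d t * v k t) - (\<Sum>t\<in>T. d t * v k0 t) * v k t0 / a"
          by (simp add: v'_def sum_subtractf right_diff_distrib sum_divide_distrib sum_distrib_right mult.assoc)
        show ?thesis unfolding e1 by (simp add: d'_def)
      qed
      also have "\<dots> = 0" using d(2) k by simp
      finally show "(\<Sum>t\<in>insert t0 T. d' t * v k t) = 0" .
    qed
    show ?thesis using A1 A2 by blast
  qed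
qed

lemma sum_Inl_Inr:
  assumes "finite U" "finite S"
  shows "sum h (Inl ` U \<union> Inr ` S) = (\<Sum>u\<in>U. h (Inl u)) + (\<Sum>s\<in>S. h (Inr s))"
proof -
  have "sum h (Inl ` U \<union> Inr ` S) = sum h (Inl ` U) + sum h (Inr ` S)"
    using assms by (intro sum.union_disjoint) auto
  also have "\<dots> = (\<Sum>u\<in>U. h (Inl u)) + (\<Sum>s\<in>S. h (Inr s))"
    by (simp add: sum.reindex)
  finally show ?thesis .
qed

lemma rep_F:
  fixes U S :: "(real ^ 'n) set"
  assumes F: "real_subfield F" and fin: "finite U" "finite S"
    and UF: "U \<subseteq> coords_in F" and SF: "S \<subseteq> coords_in F"
    and \<beta>: "\<forall>u\<in>U. \<beta> u > 0" "sum \<beta> U = 1"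
    and \<alpha>: "\<forall>s\<in>S. \<alpha> s > 0" "sum \<alpha> S = 1"
    and eq: "(\<Sum>u\<in>U. \<beta> u *\<^sub>R u) = (\<Sum>s\<in>S. \<alpha> s *\<^sub>R s)"
  shows "\<exists>\<beta>' \<alpha>'. (\<forall>u\<in>U. \<beta>' u \<in> F \<and> \<beta>' u > 0) \<and> sum \<beta>' U = 1 \<and>
     (\<forall>s\<in>S. \<alpha>' s \<in> F \<and> \<alpha>' s \<ge> 0) \<and> sum \<alpha>' S = 1 \<and>
     (\<Sum>u\<in>U. \<beta>' u *\<^sub>R u) = (\<Sum>s\<in>S. \<alpha>' s *\<^sub>R s)"
proof -
  define T where "T = Inl ` U \<union> Inr ` S"
  have Tfin: "finite T" using fin by (simp add: T_def)
  have Une: "U \<noteq> {}" using \<beta>(2) by auto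
  then have Tne: "T \<noteq> {}" by (simp add: T_def)
  define g :: "real ^ 'n + real ^ 'n \<Rightarrow> real ^ 'n" where "g = case_sum (\<lambda>u. u) (\<lambda>s. - s)"
  define e :: "real ^ 'n + real ^ 'n \<Rightarrow> real" where "e = case_sum (\<lambda>_. 1) (\<lambda>_. - 1)"
  define c where "c = case_sum \<beta> \<alpha>"
  define v :: "'n option \<Rightarrow> real ^ 'n + real ^ 'n \<Rightarrow> real"
    where "v = (\<lambda>k t. case k of None \<Rightarrow> e t | Some i \<Rightarrow> g t $ i)"
  have vF: "\<forall>k\<in>UNIV. \<forall>t\<in>T. v k t \<in> F"
  proof (intro ballI)
    fix k t assume t: "t \<in> T"
    show "v k t \<in> F"
    proof (cases k)
      case None then show ?thesis using t by (auto simp: v_def e_def T_def sf_1[OF F] sf_uminus[OF F sf_1[OF F]])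
    next
      case (Some i) then show ?thesis using t UF SF
        by (auto simp: v_def g_def T_def coords_in_def intro!: sf_uminus[OF F]; blast)
    qed
  qed
  have gsum: "(\<Sum>t\<in>T. x t *\<^sub>R g t) = (\<Sum>u\<in>U. x (Inl u) *\<^sub>R u) - (\<Sum>s\<in>S. x (Inr s) *\<^sub>R s)" for x
    unfolding T_def sum_Inl_Inr[OF fin] by (simp add: g_def sum_negf)
  have esum: "(\<Sum>t\<in>T. x t * e t) = (\<Sum>u\<in>U. x (Inl u)) - (\<Sum>s\<in>S. x (Inr s))" for x
    unfolding T_def sum_Inl_Inr[OF fin] by (simp add: e_def sum_negf)
  have vsum: "(\<forall>k\<in>UNIV. (\<Sum>t\<in>T. x t * v k t) = 0) \<longleftrightarrow>
      (\<Sum>t\<in>T. x t *\<^sub>R g t) = 0 \<and> (\<Sum>t\<in>T. x t * e t) = 0" for x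
  proof
    assume H: "\<forall>k\<in>UNIV. (\<Sum>t\<in>T. x t * v k t) = 0"
    have "(\<Sum>t\<in>T. x t *\<^sub>R g t) = 0"
    proof (subst vec_eq_iff, intro allI)
      fix i show "(\<Sum>t\<in>T. x t *\<^sub>R g t) $ i = 0 $ i"
        using H[rule_format, of "Some i"] by (simp add: sum_component v_def)
    qed
    moreover have "(\<Sum>t\<in>T. x t * e t) = 0" using H[rule_format, of None] by (simp add: v_def)
    ultimately show "(\<Sum>t\<in>T. x t *\<^sub>R g t) = 0 \<and> (\<Sum>t\<in>T. x t * e t) = 0" by simp
  next
    assume H: "(\<Sum>t\<in>T. x t *\<^sub>R g t) = 0 \<and> (\<Sum>t\<in>T. x t * e t) = 0"
    show "\<forall>k\<in>UNIV. (\<Sum>t\<in>T. x t * v k t) = 0"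
    proof
      fix k :: "'n option" show "(\<Sum>t\<in>T. x t * v k t) = 0"
      proof (cases k)
        case None then show ?thesis using H by (simp add: v_def)
      next
        case (Some i)
        have "(\<Sum>t\<in>T. x t *\<^sub>R g t) $ i = 0" using H by simp
        then show ?thesis using Some by (simp add: sum_component v_def)
      qed
    qed
  qed
  have csol: "\<forall>k\<in>UNIV. (\<Sum>t\<in>T. c t * v k t) = 0"
    unfolding vsum gsum esum using eq \<beta>(2) \<alpha>(2) by (simp add: c_def)
  have cpos: "\<forall>t\<in>T. c t > 0" using \<beta> \<alpha> by (auto simp: T_def c_def)
  define m where "m = Min (c ` T)"
  have m0: "m > 0" using cpos Tfin Tne by (simp add: m_def)
  have mle: "\<forall>t\<in>T. m \<le> c t" using Tfin by (simp add: m_def)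
  obtain d where d: "\<forall>t\<in>T. d t \<in> F \<and> \<bar>d t - c t\<bar> < m" "\<forall>k\<in>UNIV. (\<Sum>t\<in>T. d t * v k t) = 0"
    using F_approx_aux[OF F Tfin vF csol m0] by blast
  have dpos: "\<forall>t\<in>T. d t > 0" using d(1) mle by fastforce
  have dg: "(\<Sum>u\<in>U. d (Inl u) *\<^sub>R u) = (\<Sum>s\<in>S. d (Inr s) *\<^sub>R s)"
    and de: "(\<Sum>u\<in>U. d (Inl u)) = (\<Sum>s\<in>S. d (Inr s))"
    using d(2) unfolding vsum gsum esum by auto
  define D where "D = (\<Sum>u\<in>U. d (Inl u))"
  have D0: "D > 0" unfolding D_def using dpos Une fin by (intro sum_pos) (auto simp: T_def)
  have DF: "D \<in> F" unfolding D_def using d(1) by (intro sf_sum[OF F]) (auto simp: T_def)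
  have A1: "\<forall>u\<in>U. d (Inl u) / D \<in> F \<and> d (Inl u) / D > 0"
      using d(1) dpos D0 DF by (auto simp: T_def intro!: sf_divide[OF F])
  have A2: "\<forall>s\<in>S. d (Inr s) / D \<in> F \<and> d (Inr s) / D \<ge> 0"
      using d(1) dpos D0 DF by (auto simp: T_def intro!: sf_divide[OF F] less_imp_le)
  have A3: "(\<Sum>u\<in>U. d (Inl u) / D) = 1" using D0 by (simp add: D_def sum_divide_distrib[symmetric])
  have A4: "(\<Sum>s\<in>S. d (Inr s) / D) = 1" using D0 de by (simp add: D_def sum_divide_distrib[symmetric])
  have A5: "(\<Sum>u\<in>U. (d (Inl u) / D) *\<^sub>R u) = (\<Sum>s\<in>S. (d (Inr s) / D) *\<^sub>R s)"
  proof -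
    have "(\<Sum>u\<in>U. (d (Inl u) / D) *\<^sub>R u) = inverse D *\<^sub>R (\<Sum>u\<in>U. d (Inl u) *\<^sub>R u)"
      by (simp add: scaleR_sum_right divide_inverse mult.commute)
    also have "\<dots> = inverse D *\<^sub>R (\<Sum>s\<in>S. d (Inr s) *\<^sub>R s)" using dg by simp
    also have "\<dots> = (\<Sum>s\<in>S. (d (Inr s) / D) *\<^sub>R s)"
      by (simp add: scaleR_sum_right divide_inverse mult.commute)
    finally show ?thesis .
  qed
  show ?thesis
    by (rule exI[of _ "\<lambda>u. d (Inl u) / D"], rule exI[of _ "\<lambda>s. d (Inr s) / D"]) (use A1 A2 A3 A4 A5 in blast)
qed



lemma conv_K_mono: "A \<subseteq> B \<Longrightarrow> conv_K K A \<subseteq> conv_K K B"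
  unfolding conv_K_def by blast

lemma conv_K_single: "1 \<in> K \<Longrightarrow> u \<in> A \<Longrightarrow> u \<in> conv_K K A"
  unfolding conv_K_def by (intro CollectI exI[of _ "{u}"] exI[of _ "\<lambda>_. 1"]) auto

lemma conv_K_le:
  fixes \<phi> :: "'a::real_vector \<Rightarrow> real"
  assumes "linear \<phi>" "\<forall>s\<in>A. \<phi> s \<le> M" "z \<in> conv_K K A"
  shows "\<phi> z \<le> M"
proof -
  obtain S r where S: "finite S" "S \<subseteq> A" "\<forall>s\<in>S. r s \<in> K \<and> 0 \<le> r s" "sum r S = 1"
    "z = (\<Sum>s\<in>S. r s *\<^sub>R s)" using assms(3) unfolding conv_K_def by blast
  have "\<phi> z = (\<Sum>s\<in>S. r s * \<phi> s)"
    using S(5) assms(1) by (simp add: linear_sum linear_scale)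
  also have "\<dots> \<le> (\<Sum>s\<in>S. r s * M)"
    using S assms(2) by (intro sum_mono mult_left_mono) auto
  also have "\<dots> = M" using S(4) by (simp add: sum_distrib_right[symmetric])
  finally show ?thesis .
qed

lemma conv_K_eq:
  fixes \<phi> :: "'a::real_vector \<Rightarrow> real"
  assumes "linear \<phi>" "\<forall>s\<in>A. \<phi> s = M" "z \<in> conv_K K A"
  shows "\<phi> z = M"
proof -
  obtain S r where S: "finite S" "S \<subseteq> A" "\<forall>s\<in>S. r s \<in> K \<and> 0 \<le> r s" "sum r S = 1"
    "z = (\<Sum>s\<in>S. r s *\<^sub>R s)" using assms(3) unfolding conv_K_def by blast
  have "\<phi> z = (\<Sum>s\<in>S. r s * \<phi> s)"
    using S(5) assms(1) by (simp add: linear_sum linear_scale)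
  also have "\<dots> = (\<Sum>s\<in>S. r s * M)"
    using S assms(2) by (intro sum.cong) auto
  also have "\<dots> = M" using S(4) by (simp add: sum_distrib_right[symmetric])
  finally show ?thesis .
qed

lemma easy_dir:
  fixes \<phi> :: "'a::real_vector \<Rightarrow> real"
  assumes F: "real_subfield F" and lin: "linear \<phi>" and M: "M > 0"
    and le: "\<forall>x\<in>X. \<phi> x \<le> M" and Y: "Y = {x \<in> X. \<phi> x = M}"
  shows "positive_weak_face F Y X"
proof -
  have Yeq: "\<forall>s\<in>Y. \<phi> s = M" using Y by auto
  have wf: "weak_face F Y X"
    unfolding weak_face_def
  proof (intro conjI allI impI)
    show "Y \<subseteq> X" using Y by auto
    fix U assume U: "U \<subseteq> X" "conv_K F Y \<inter> relint_K F (conv_K F U) \<noteq> {}"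
    then obtain p where p: "p \<in> conv_K F Y" "p \<in> relint_K F (conv_K F U)" by blast
    have pM: "\<phi> p = M" using conv_K_eq[OF lin Yeq p(1)] .
    show "U \<subseteq> Y"
    proof
      fix u assume u: "u \<in> U"
      have "u \<in> conv_K F U" using conv_K_single[OF sf_1[OF F] u] .
      then obtain z t where zt: "z \<in> conv_K F U" "0 < t" "t < 1" "p = t *\<^sub>R u + (1 - t) *\<^sub>R z"
        using p(2) unfolding relint_K_def by blast
      have zle: "\<phi> z \<le> M" using conv_K_le[OF lin _ zt(1)] le U(1) by blast
      have ule: "\<phi> u \<le> M" using le U(1) u by blast
      have "M = t * \<phi> u + (1 - t) * \<phi> z"
        using pM zt(4) lin by (simp add: linear_add linear_scale)
      moreover have "(1 - t) * \<phi> z \<le> (1 - t) * M" using zle zt(3) by (intro mult_left_mono) auto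
      moreover have "\<phi> u < M \<Longrightarrow> t * \<phi> u < t * M" using zt(2) by simp
      moreover have "t * M + (1 - t) * M = M" by (simp add: algebra_simps)
      ultimately have "\<phi> u = M"
        using ule by linarith
      then show "u \<in> Y" using Y u U(1) by blast
    qed
  qed
  moreover have "conv_K F Y \<inter> relint_K F (conv_K F (U \<union> {0})) = {}" if U: "U \<subseteq> X" for U
  proof (rule ccontr)
    assume "conv_K F Y \<inter> relint_K F (conv_K F (U \<union> {0})) \<noteq> {}"
    then obtain p where p: "p \<in> conv_K F Y" "p \<in> relint_K F (conv_K F (U \<union> {0}))" by blast
    have pM: "\<phi> p = M" using conv_K_eq[OF lin Yeq p(1)] .
    have "0 \<in> conv_K F (U \<union> {0})" using conv_K_single[OF sf_1[OF F]] by blast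
    then obtain z t where zt: "z \<in> conv_K F (U \<union> {0})" "0 < t" "t < 1" "p = t *\<^sub>R 0 + (1 - t) *\<^sub>R z"
      using p(2) unfolding relint_K_def by blast
    have "\<forall>s\<in>U \<union> {0}. \<phi> s \<le> M" using le U M lin by (auto simp: linear_0)
    then have zle: "\<phi> z \<le> M" using conv_K_le[OF lin _ zt(1)] by blast
    have "M = (1 - t) * \<phi> z" using pM zt(4) lin by (simp add: linear_scale)
    moreover have "(1 - t) * \<phi> z \<le> (1 - t) * M" using zle zt(3) by (intro mult_left_mono) auto
    moreover have "(1 - t) * M < M" using zt(2) M by simp
    ultimately show False by simp
  qed
  ultimately show ?thesis unfolding positive_weak_face_def by blast
qed

lemma relint_pos:
  assumes F: "real_subfield F" and fin: "finite U" and \<beta>: "\<forall>u\<in>U. \<beta> u \<in> F \<and> \<beta> u > 0"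
    and s1: "sum \<beta> U = 1"
  shows "(\<Sum>u\<in>U. \<beta> u *\<^sub>R u) \<in> relint_K F (conv_K F U)"
proof -
  let ?p = "(\<Sum>u\<in>U. \<beta> u *\<^sub>R u)"
  have Une: "U \<noteq> {}" using s1 by auto
  have pin: "?p \<in> conv_K F U" unfolding conv_K_def
    using fin \<beta> s1 by (intro CollectI exI[of _ U] exI[of _ \<beta>]) auto
  define m where "m = Min (\<beta> ` U)"
  have mU: "m \<in> \<beta> ` U" using fin Une by (simp add: m_def)
  have mF: "m \<in> F" using mU \<beta> by auto
  have m0: "m > 0" using mU \<beta> by auto
  have mle: "\<forall>u\<in>U. m \<le> \<beta> u" using fin by (simp add: m_def)
  have m1: "m \<le> 1"
  proof -
    obtain u where u: "u \<in> U" using Une by auto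
    have "\<beta> u \<le> sum \<beta> U" using fin u \<beta> by (intro member_le_sum) auto
    then show ?thesis using mle u s1 by fastforce
  qed
  define t where "t = m / 2"
  have tF: "t \<in> F" unfolding t_def using sf_divide[OF F mF] sf_add[OF F sf_1[OF F] sf_1[OF F]] by simp
  have t01: "0 < t" "t < 1" using m0 m1 by (auto simp: t_def)
  have "\<forall>w\<in>conv_K F U. \<exists>z\<in>conv_K F U. \<exists>t. t \<in> F \<and> 0 < t \<and> t < 1 \<and> ?p = t *\<^sub>R w + (1 - t) *\<^sub>R z"
  proof
    fix w assume "w \<in> conv_K F U"
    then obtain S r where S: "finite S" "S \<subseteq> U" "\<forall>s\<in>S. r s \<in> F \<and> 0 \<le> r s" "sum r S = 1"
      "w = (\<Sum>s\<in>S. r s *\<^sub>R s)" unfolding conv_K_def by blast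
    define r' where "r' = (\<lambda>u. if u \<in> S then r u else 0)"
    have r'F: "\<forall>u\<in>U. r' u \<in> F \<and> 0 \<le> r' u" using S(3) sf_0[OF F] by (auto simp: r'_def)
    have r'sum: "sum r' U = 1" using S fin unfolding r'_def
      by (simp add: sum.If_cases Int_absorb1)
    have r'w: "w = (\<Sum>u\<in>U. r' u *\<^sub>R u)" using S fin unfolding r'_def
      by (simp add: if_distrib[of "\<lambda>x. x *\<^sub>R _"] sum.If_cases Int_absorb1 cong: if_cong)
    have r'1: "\<forall>u\<in>U. r' u \<le> 1"
    proof
      fix u assume u: "u \<in> U"
      have "r' u \<le> sum r' U" using fin u r'F by (intro member_le_sum) auto
      then show "r' u \<le> 1" using r'sum by simp
    qed
    define \<gamma> where "\<gamma> = (\<lambda>u. (\<beta> u - t * r' u) / (1 - t))"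
    define z where "z = (\<Sum>u\<in>U. \<gamma> u *\<^sub>R u)"
    have \<gamma>F: "\<forall>u\<in>U. \<gamma> u \<in> F \<and> 0 \<le> \<gamma> u"
    proof
      fix u assume u: "u \<in> U"
      have "t * r' u \<le> t" using r'1 u t01 by (simp add: mult_left_le)
      moreover have "t < \<beta> u" using mle u m0 by (fastforce simp: t_def)
      ultimately have "0 \<le> \<beta> u - t * r' u" by simp
      then show "\<gamma> u \<in> F \<and> 0 \<le> \<gamma> u" using u \<beta> r'F tF t01
        by (auto simp: \<gamma>_def intro!: sf_divide[OF F] sf_diff[OF F] sf_mult[OF F] sf_1[OF F])
    qed
    have \<gamma>sum: "sum \<gamma> U = 1"
      using s1 r'sum t01 by (simp add: \<gamma>_def sum_divide_distrib[symmetric] sum_subtractf sum_distrib_left[symmetric])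
    have zin: "z \<in> conv_K F U" unfolding conv_K_def z_def
      using fin \<gamma>F \<gamma>sum by (intro CollectI exI[of _ U] exI[of _ \<gamma>]) auto
    have "(1 - t) *\<^sub>R z = (\<Sum>u\<in>U. (\<beta> u - t * r' u) *\<^sub>R u)"
      using t01 by (simp add: z_def \<gamma>_def scaleR_sum_right)
    also have "\<dots> = ?p - t *\<^sub>R w"
      by (simp add: r'w scaleR_diff_left sum_subtractf scaleR_sum_right)
    finally have "?p = t *\<^sub>R w + (1 - t) *\<^sub>R z" by simp
    then show "\<exists>z\<in>conv_K F U. \<exists>t. t \<in> F \<and> 0 < t \<and> t < 1 \<and> ?p = t *\<^sub>R w + (1 - t) *\<^sub>R z"
      using zin tF t01 by blast
  qed
  then show ?thesis using pin unfolding relint_K_def by blast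
qed



lemma core:
  fixes Z Y :: "(real ^ 'n) set"
  assumes F: "real_subfield F" and ZF: "Z \<subseteq> coords_in F"
    and poly: "polyhedron (convex hull Z)" and YZ: "Y \<subseteq> Z" and Yne: "Y \<noteq> {}"
  shows "\<exists>(\<phi>::real^'n \<Rightarrow> real) M. linear \<phi> \<and> (\<forall>x\<in>convex hull Z. \<phi> x \<le> M) \<and> (\<forall>y\<in>Y. \<phi> y = M) \<and>
     (\<forall>x\<in>Z. \<phi> x = M \<longrightarrow> (\<exists>U. U \<subseteq> Z \<and> x \<in> U \<and> conv_K F Y \<inter> relint_K F (conv_K F U) \<noteq> {}))"
proof -
  obtain H a b where Hfin: "finite H" and HP: "convex hull Z = \<Inter> H"
    and ab: "\<And>h. h \<in> H \<Longrightarrow> a h \<noteq> 0 \<and> h = {x. a h \<bullet> x \<le> b h}"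
    using poly unfolding polyhedron_def by metis
  define P where "P = convex hull Z"
  have inP: "x \<in> P \<longleftrightarrow> (\<forall>h\<in>H. a h \<bullet> x \<le> b h)" for x
    unfolding P_def HP using ab by auto
  have ZP: "Z \<subseteq> P" unfolding P_def by (rule hull_subset)
  define J where "J = {h\<in>H. \<forall>y\<in>Y. a h \<bullet> y = b h}"
  have JH: "J \<subseteq> H" and Jfin: "finite J" using Hfin by (auto simp: J_def intro: finite_subset)
  define \<phi> where "\<phi> = (\<lambda>x. (\<Sum>h\<in>J. a h) \<bullet> x)"
  define M where "M = (\<Sum>h\<in>J. b h)"
  have lin: "linear \<phi>" unfolding \<phi>_def by (rule bounded_linear.linear[OF bounded_linear_inner_right])
  have \<phi>sum: "\<phi> x = (\<Sum>h\<in>J. a h \<bullet> x)" for x unfolding \<phi>_def by (simp add: inner_sum_left)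
  have le: "\<forall>x\<in>P. \<phi> x \<le> M"
    using JH inP unfolding \<phi>sum M_def by (auto intro!: sum_mono)
  have tight: "\<forall>h\<in>J. a h \<bullet> x = b h" if x: "x \<in> P" "\<phi> x = M" for x
  proof -
    have "(\<Sum>h\<in>J. b h - a h \<bullet> x) = 0" using x(2) by (simp add: \<phi>sum M_def sum_subtractf)
    moreover have "\<forall>h\<in>J. 0 \<le> b h - a h \<bullet> x" using x(1) JH inP by auto
    ultimately have "\<forall>h\<in>J. b h - a h \<bullet> x = 0"
      using sum_nonneg_eq_0_iff[OF Jfin, of "\<lambda>h. b h - a h \<bullet> x"] by blast
    then show ?thesis by simp
  qed
  have Yeq: "\<forall>y\<in>Y. \<phi> y = M" unfolding \<phi>sum M_def
  proof
    fix y assume "y \<in> Y"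
    then show "(\<Sum>h\<in>J. a h \<bullet> y) = sum b J" by (intro sum.cong) (auto simp: J_def)
  qed
  have "\<forall>h\<in>H - J. \<exists>y\<in>Y. a h \<bullet> y < b h"
  proof
    fix h assume h: "h \<in> H - J"
    then obtain y where y: "y \<in> Y" "a h \<bullet> y \<noteq> b h" by (auto simp: J_def)
    have "a h \<bullet> y \<le> b h" using y(1) YZ ZP inP h by blast
    then show "\<exists>y\<in>Y. a h \<bullet> y < b h" using y by force
  qed
  then obtain yf where yf: "\<forall>h\<in>H - J. yf h \<in> Y \<and> a h \<bullet> yf h < b h" by metis
  obtain y0 where y0: "y0 \<in> Y" using Yne by auto
  define S where "S = insert y0 (yf ` (H - J))"
  have Sfin: "finite S" using Hfin by (simp add: S_def)
  have SY: "S \<subseteq> Y" using y0 yf by (auto simp: S_def)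
  have Sne: "S \<noteq> {}" by (simp add: S_def)
  have cS: "card S > 0" using Sfin Sne by (simp add: card_gt_0_iff)
  define \<alpha> where "\<alpha> = (\<lambda>s::real^'n. 1 / real (card S))"
  define p where "p = (\<Sum>s\<in>S. \<alpha> s *\<^sub>R s)"
  have \<alpha>pos: "\<forall>s\<in>S. \<alpha> s > 0" using cS by (simp add: \<alpha>_def)
  have \<alpha>sum: "sum \<alpha> S = 1" using cS by (simp add: \<alpha>_def)
  have ap: "a h \<bullet> p = (\<Sum>s\<in>S. a h \<bullet> s) / real (card S)" for h
    by (simp add: p_def \<alpha>_def inner_sum_right sum_divide_distrib)
  have pJ: "\<forall>h\<in>J. a h \<bullet> p = b h"
  proof
    fix h assume h: "h \<in> J"
    have "(\<Sum>s\<in>S. a h \<bullet> s) = (\<Sum>s\<in>S. b h)" using h SY by (intro sum.cong) (auto simp: J_def)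
    then show "a h \<bullet> p = b h" using cS by (simp add: ap)
  qed
  have pHJ: "\<forall>h\<in>H - J. a h \<bullet> p < b h"
  proof
    fix h assume h: "h \<in> H - J"
    have "(\<Sum>s\<in>S. a h \<bullet> s) < (\<Sum>s\<in>S. b h)"
    proof (rule sum_strict_mono_ex1[OF Sfin])
      show "\<forall>s\<in>S. a h \<bullet> s \<le> b h" using SY YZ ZP inP h by blast
      show "\<exists>s\<in>S. a h \<bullet> s < b h" using yf h by (auto simp: S_def)
    qed
    then show "a h \<bullet> p < b h" using cS by (simp add: ap field_simps)
  qed
  have main: "\<exists>U. U \<subseteq> Z \<and> x \<in> U \<and> conv_K F Y \<inter> relint_K F (conv_K F U) \<noteq> {}"
    if x: "x \<in> Z" "\<phi> x = M" for x
  proof -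
    have xJ: "\<forall>h\<in>J. a h \<bullet> x = b h" using tight[of x] x ZP by blast
    have "\<forall>h\<in>H - J. eventually (\<lambda>e. a h \<bullet> (p + e *\<^sub>R (p - x)) < b h) (at_right 0)"
    proof
      fix h assume h: "h \<in> H - J"
      have "((\<lambda>e::real. a h \<bullet> (p + e *\<^sub>R (p - x))) \<longlongrightarrow> a h \<bullet> (p + 0 *\<^sub>R (p - x))) (at_right 0)"
        by (intro tendsto_intros)
      then show "eventually (\<lambda>e. a h \<bullet> (p + e *\<^sub>R (p - x)) < b h) (at_right 0)"
        using pHJ h by (intro order_tendstoD(2)) auto
    qed
    then have "eventually (\<lambda>e. \<forall>h\<in>H - J. a h \<bullet> (p + e *\<^sub>R (p - x)) < b h) (at_right (0::real))"
      using Hfin by (simp add: eventually_ball_finite_distrib)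
    then obtain b' where b': "b' > 0" "\<forall>e>0. e < b' \<longrightarrow> (\<forall>h\<in>H - J. a h \<bullet> (p + e *\<^sub>R (p - x)) < b h)"
      unfolding eventually_at_right_field by auto
    define \<epsilon> where "\<epsilon> = b' / 2"
    have \<epsilon>0: "\<epsilon> > 0" using b' by (simp add: \<epsilon>_def)
    define q where "q = p + \<epsilon> *\<^sub>R (p - x)"
    have qHJ: "\<forall>h\<in>H - J. a h \<bullet> q < b h" using b' \<epsilon>0 by (auto simp: q_def \<epsilon>_def)
    have "\<forall>h\<in>J. a h \<bullet> q = b h" using pJ xJ by (simp add: q_def inner_add_right inner_diff_right)
    then have "q \<in> P" unfolding inP using qHJ by force
    then obtain W w where W: "finite W" "W \<subseteq> Z" "\<forall>v\<in>W. 0 \<le> w v" "sum w W = 1"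
      "(\<Sum>v\<in>W. w v *\<^sub>R v) = q"
      unfolding P_def convex_hull_explicit by blast
    define W' where "W' = {v\<in>W. w v > 0}"
    have W'W: "W' \<subseteq> W" and W'fin: "finite W'" using W(1) by (auto simp: W'_def)
    have W0: "\<forall>v\<in>W - W'. w v = 0" using W(3) by (force simp: W'_def)
    have W'sum: "sum w W' = 1"
      using W(4) sum.mono_neutral_left[OF W(1) W'W, of w] W0 by simp
    have W'q: "(\<Sum>v\<in>W'. w v *\<^sub>R v) = q"
      using W(5) sum.mono_neutral_left[OF W(1) W'W, of "\<lambda>v. w v *\<^sub>R v"] W0 by simp
    define U where "U = insert x W'"
    have Ufin: "finite U" using W'fin by (simp add: U_def)
    have UZ: "U \<subseteq> Z" using W(2) W'W x(1) by (auto simp: U_def)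
    define \<beta> where "\<beta> = (\<lambda>v. ((if v \<in> W' then w v else 0) + (if v = x then \<epsilon> else 0)) / (1 + \<epsilon>))"
    have \<beta>pos: "\<forall>u\<in>U. \<beta> u > 0"
    proof
      fix u assume u: "u \<in> U"
      have "0 < (if u \<in> W' then w u else 0) + (if u = x then \<epsilon> else 0)"
      proof (cases "u = x")
        case True
        have "0 \<le> (if u \<in> W' then w u else 0)" by (auto simp: W'_def)
        then show ?thesis using True \<epsilon>0 by simp
      next
        case False
        then have "u \<in> W'" using u by (simp add: U_def)
        then show ?thesis using False by (simp add: W'_def)
      qed
      then show "\<beta> u > 0" using \<epsilon>0 by (simp add: \<beta>_def)
    qed
    have s1: "(\<Sum>v\<in>U. (if v \<in> W' then w v else 0)) = sum w W'"
    proof -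
      have "(\<Sum>v\<in>U. (if v \<in> W' then w v else 0)) = sum w (U \<inter> W')"
        using sum.inter_restrict[OF Ufin, of w W'] by simp
      also have "U \<inter> W' = W'" by (auto simp: U_def)
      finally show ?thesis .
    qed
    have s2: "(\<Sum>v\<in>U. (if v \<in> W' then w v else 0) *\<^sub>R v) = (\<Sum>v\<in>W'. w v *\<^sub>R v)"
    proof -
      have "(\<Sum>v\<in>U. (if v \<in> W' then w v else 0) *\<^sub>R v) = (\<Sum>v\<in>U. if v \<in> W' then w v *\<^sub>R v else 0)"
        by (intro sum.cong) auto
      also have "\<dots> = (\<Sum>v\<in>U \<inter> W'. w v *\<^sub>R v)" using sum.inter_restrict[OF Ufin, of "\<lambda>v. w v *\<^sub>R v" W'] by simp
      also have "U \<inter> W' = W'" by (auto simp: U_def)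
      finally show ?thesis .
    qed
    have s3: "(\<Sum>v\<in>U. (if v = x then \<epsilon> else 0)) = \<epsilon>"
      using Ufin by (simp add: U_def)
    have s4: "(\<Sum>v\<in>U. (if v = x then \<epsilon> else 0) *\<^sub>R v) = \<epsilon> *\<^sub>R x"
    proof -
      have "(\<Sum>v\<in>U. (if v = x then \<epsilon> else 0) *\<^sub>R v) = (\<Sum>v\<in>U. if v = x then \<epsilon> *\<^sub>R v else 0)"
        by (intro sum.cong) auto
      also have "\<dots> = \<epsilon> *\<^sub>R x" using Ufin by (simp add: U_def)
      finally show ?thesis .
    qed
    have \<beta>sum: "sum \<beta> U = 1"
      using \<epsilon>0 unfolding \<beta>_def sum_divide_distrib[symmetric] sum.distrib s1 s3 W'sum by simp
    have \<beta>p: "(\<Sum>u\<in>U. \<beta> u *\<^sub>R u) = p"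
    proof -
      have "(\<Sum>u\<in>U. \<beta> u *\<^sub>R u) = inverse (1 + \<epsilon>) *\<^sub>R (\<Sum>v\<in>U. ((if v \<in> W' then w v else 0) + (if v = x then \<epsilon> else 0)) *\<^sub>R v)"
        by (simp add: \<beta>_def scaleR_sum_right divide_inverse mult.commute)
      also have "\<dots> = inverse (1 + \<epsilon>) *\<^sub>R (q + \<epsilon> *\<^sub>R x)"
        by (simp only: scaleR_add_left sum.distrib s2 s4 W'q)
      also have "q + \<epsilon> *\<^sub>R x = (1 + \<epsilon>) *\<^sub>R p" by (simp add: q_def algebra_simps)
      finally show ?thesis using \<epsilon>0 by simp
    qed
    have UF: "U \<subseteq> coords_in F" using UZ ZF by blast
    have SF: "S \<subseteq> coords_in F" using SY YZ ZF by blast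
    have eqp: "(\<Sum>u\<in>U. \<beta> u *\<^sub>R u) = (\<Sum>s\<in>S. \<alpha> s *\<^sub>R s)" using \<beta>p by (simp add: p_def)
    obtain \<beta>' \<alpha>' where ba: "\<forall>u\<in>U. \<beta>' u \<in> F \<and> \<beta>' u > 0" "sum \<beta>' U = 1"
      "\<forall>s\<in>S. \<alpha>' s \<in> F \<and> \<alpha>' s \<ge> 0" "sum \<alpha>' S = 1"
      "(\<Sum>u\<in>U. \<beta>' u *\<^sub>R u) = (\<Sum>s\<in>S. \<alpha>' s *\<^sub>R s)"
      using rep_F[OF F Ufin Sfin UF SF \<beta>pos \<beta>sum \<alpha>pos \<alpha>sum eqp] by blast
    have "(\<Sum>s\<in>S. \<alpha>' s *\<^sub>R s) \<in> conv_K F Y"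
      unfolding conv_K_def using Sfin SY ba(3,4) by blast
    moreover have "(\<Sum>s\<in>S. \<alpha>' s *\<^sub>R s) \<in> relint_K F (conv_K F U)"
      using relint_pos[OF F Ufin ba(1,2)] ba(5) by simp
    ultimately show ?thesis using UZ by (intro exI[of _ U]) (auto simp: U_def)
  qed
  show ?thesis
    apply (rule exI[of _ \<phi>], rule exI[of _ M])
    using lin le Yeq main unfolding P_def by blast
qed



lemma conv_K_empty: "conv_K K {} = {}"
  unfolding conv_K_def by auto

lemma hull_eq_lin:
  fixes \<phi> :: "'a::real_vector \<Rightarrow> real"
  assumes "linear \<phi>" "\<forall>x\<in>X. \<phi> x = M" "z \<in> convex hull X"
  shows "\<phi> z = M"
proof -
  have "z \<in> conv_K UNIV X" using assms(3) unfolding convex_hull_explicit conv_K_def by auto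
  then show ?thesis using conv_K_eq[OF assms(1,2)] by blast
qed

lemma part1:
  fixes F :: "real set" and X :: "(real ^ 'n) set"
  assumes F: "real_subfield F" and XF: "X \<subseteq> coords_in F"
    and poly: "polyhedron (convex hull (X \<union> {0}))"
    and Y: "Y \<subseteq> X" "Y \<noteq> {}"
  shows "positive_weak_face F Y X \<longleftrightarrow>
              (\<exists>\<phi> :: real ^ 'n \<Rightarrow> real. \<exists>M. linear \<phi> \<and> M > 0 \<and>
                 (\<exists>x\<in>X. \<phi> x = M) \<and> (\<forall>x\<in>X. \<phi> x \<le> M) \<and>
                 Y = {x \<in> X. \<phi> x = M})"
proof
  assume "\<exists>\<phi> :: real ^ 'n \<Rightarrow> real. \<exists>M. linear \<phi> \<and> M > 0 \<and>
                 (\<exists>x\<in>X. \<phi> x = M) \<and> (\<forall>x\<in>X. \<phi> x \<le> M) \<and> Y = {x \<in> X. \<phi> x = M}"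
  then show "positive_weak_face F Y X" using easy_dir[OF F] by blast
next
  assume pos: "positive_weak_face F Y X"
  have wf: "weak_face F Y X" using pos by (simp add: positive_weak_face_def)
  have pz: "\<And>U. U \<subseteq> X \<Longrightarrow> conv_K F Y \<inter> relint_K F (conv_K F (U \<union> {0})) = {}"
    using pos by (simp add: positive_weak_face_def)
  define Z where "Z = insert 0 X"
  have ZF: "Z \<subseteq> coords_in F" using XF sf_0[OF F] by (auto simp: Z_def coords_in_def)
  have polyZ: "polyhedron (convex hull Z)" using poly by (simp add: Z_def)
  have YZ: "Y \<subseteq> Z" using Y(1) by (auto simp: Z_def)
  obtain \<phi> :: "real^'n \<Rightarrow> real" and M where lin: "linear \<phi>" and le: "\<forall>x\<in>convex hull Z. \<phi> x \<le> M"
    and Yeq: "\<forall>y\<in>Y. \<phi> y = M"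
    and main: "\<forall>x\<in>Z. \<phi> x = M \<longrightarrow> (\<exists>U. U \<subseteq> Z \<and> x \<in> U \<and> conv_K F Y \<inter> relint_K F (conv_K F U) \<noteq> {})"
    using core[OF F ZF polyZ YZ Y(2)] by blast
  have key: "x \<in> Y \<and> x \<noteq> 0" if x: "x \<in> Z" "\<phi> x = M" for x
  proof -
    obtain U where U: "U \<subseteq> Z" "x \<in> U" "conv_K F Y \<inter> relint_K F (conv_K F U) \<noteq> {}"
      using main x by blast
    show ?thesis
    proof (cases "0 \<in> U")
      case True
      have "U = (U - {0}) \<union> {0}" using True by auto
      moreover have "U - {0} \<subseteq> X" using U(1) by (auto simp: Z_def)
      ultimately have False using pz[of "U - {0}"] U(3) by metis
      then show ?thesis ..
    next
      case False
      then have "U \<subseteq> X" using U(1) by (auto simp: Z_def)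
      then have "U \<subseteq> Y" using wf U(3) by (auto simp: weak_face_def)
      then show ?thesis using U(2) False by blast
    qed
  qed
  have ZC: "Z \<subseteq> convex hull Z" by (rule hull_subset)
  have \<phi>0: "\<phi> 0 = 0" using lin by (simp add: linear_0)
  have "0 \<le> M" using le ZC \<phi>0 by (auto simp: Z_def)
  moreover have "M \<noteq> 0" using key[of 0] \<phi>0 by (auto simp: Z_def)
  ultimately have M0: "M > 0" by simp
  have XZ: "X \<subseteq> Z" by (auto simp: Z_def)
  have "Y = {x \<in> X. \<phi> x = M}" using Yeq Y(1) key XZ by blast
  moreover have "\<exists>x\<in>X. \<phi> x = M" using Y Yeq by blast
  moreover have "\<forall>x\<in>X. \<phi> x \<le> M" using le ZC XZ by blast
  ultimately show "\<exists>\<phi> :: real ^ 'n \<Rightarrow> real. \<exists>M. linear \<phi> \<and> M > 0 \<and>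
                 (\<exists>x\<in>X. \<phi> x = M) \<and> (\<forall>x\<in>X. \<phi> x \<le> M) \<and> Y = {x \<in> X. \<phi> x = M}"
    using lin M0 by blast
qed

lemma part2:
  fixes F :: "real set" and X :: "(real ^ 'n) set"
  assumes F: "real_subfield F" and XF: "X \<subseteq> coords_in F"
    and poly: "polyhedron (convex hull (X \<union> {0}))"
    and ri: "0 \<in> rel_interior (convex hull X)"
    and YX: "Y \<subseteq> X"
  shows "positive_weak_face F Y X \<longleftrightarrow> Y \<noteq> X \<and> weak_face F Y X"
proof -
  have Xne: "X \<noteq> {}" using ri by auto
  have zC: "0 \<in> convex hull X" using ri rel_interior_subset by blast
  have polyX: "polyhedron (convex hull X)"
    using poly hull_redundant_eq[THEN iffD1, OF zC] by simp
  show ?thesis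
  proof
    assume pos: "positive_weak_face F Y X"
    have wf: "weak_face F Y X" using pos by (simp add: positive_weak_face_def)
    moreover have "Y \<noteq> X"
    proof
      assume YX': "Y = X"
      obtain \<phi> :: "real^'n \<Rightarrow> real" and M where \<phi>: "linear \<phi>" "M > 0" "X = {x \<in> X. \<phi> x = M}"
        using part1[OF F XF poly, of X] pos Xne YX' by blast
      have "\<forall>x\<in>X. \<phi> x = M" using \<phi>(3) by blast
      then have "\<phi> 0 = M" using hull_eq_lin[OF \<phi>(1) _ zC] by blast
      then show False using \<phi>(1,2) by (simp add: linear_0)
    qed
    ultimately show "Y \<noteq> X \<and> weak_face F Y X" by simp
  next
    assume H: "Y \<noteq> X \<and> weak_face F Y X"
    show "positive_weak_face F Y X"
    proof (cases "Y = {}")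
      case True
      then show ?thesis using H by (simp add: positive_weak_face_def conv_K_empty)
    next
      case Yne: False
      obtain \<phi> :: "real^'n \<Rightarrow> real" and M where lin: "linear \<phi>" and le: "\<forall>x\<in>convex hull X. \<phi> x \<le> M"
        and Yeq: "\<forall>y\<in>Y. \<phi> y = M"
        and main: "\<forall>x\<in>X. \<phi> x = M \<longrightarrow> (\<exists>U. U \<subseteq> X \<and> x \<in> U \<and> conv_K F Y \<inter> relint_K F (conv_K F U) \<noteq> {})"
        using core[OF F XF polyX YX Yne] by blast
      have key: "x \<in> Y" if x: "x \<in> X" "\<phi> x = M" for x
      proof -
        obtain U where U: "U \<subseteq> X" "x \<in> U" "conv_K F Y \<inter> relint_K F (conv_K F U) \<noteq> {}"
          using main x by blast
        then have "U \<subseteq> Y" using H by (simp add: weak_face_def)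
        then show ?thesis using U(2) by blast
      qed
      have XC: "X \<subseteq> convex hull X" by (rule hull_subset)
      obtain x1 where x1: "x1 \<in> X" "x1 \<notin> Y" using H YX by blast
      have lt: "\<phi> x1 < M" using le XC x1 key by force
      obtain e where e: "e > 0" "cball 0 e \<inter> affine hull (convex hull X) \<subseteq> convex hull X"
        using ri unfolding mem_rel_interior_cball by blast
      define \<delta> where "\<delta> = e / (norm x1 + 1)"
      have \<delta>0: "\<delta> > 0" using e by (simp add: \<delta>_def add_nonneg_pos)
      define z where "z = (- \<delta>) *\<^sub>R x1"
      have "norm z = \<delta> * norm x1" using \<delta>0 by (simp add: z_def)
      also have "\<dots> \<le> e"
      proof -
        have "norm x1 \<le> norm x1 + 1" by simp
        then have "e * norm x1 \<le> e * (norm x1 + 1)" using e(1) by (intro mult_left_mono) auto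
        moreover have "\<delta> * norm x1 = e * norm x1 / (norm x1 + 1)" by (simp add: \<delta>_def)
        moreover have "norm x1 + 1 > 0" by (simp add: add_nonneg_pos)
        ultimately show ?thesis by (simp add: pos_divide_le_eq)
      qed
      finally have zb: "z \<in> cball 0 e" by simp
      have "z = (1 + \<delta>) *\<^sub>R 0 + (- \<delta>) *\<^sub>R x1" by (simp add: z_def)
      moreover have "(1 + \<delta>) *\<^sub>R (0::real^'n) + (- \<delta>) *\<^sub>R x1 \<in> affine hull (convex hull X)"
        using zC x1(1) XC convex_hull_subset_affine_hull[of X]
        by (intro mem_affine[OF affine_affine_hull]) (auto intro: hull_inc)
      ultimately have "z \<in> convex hull X" using e(2) zb by auto
      then have zM: "\<phi> z \<le> M" using le by blast
      have "\<phi> z = - \<delta> * \<phi> x1" unfolding z_def using linear_scale[OF lin, of "- \<delta>" x1] by simp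
      moreover have "\<delta> * \<phi> x1 < \<delta> * M" using lt \<delta>0 by simp
      ultimately have "0 < (1 + \<delta>) * M" using zM
        by (simp add: algebra_simps)
      then have M0: "M > 0" using \<delta>0 by (simp add: zero_less_mult_iff)
      have "Y = {x \<in> X. \<phi> x = M}" using Yeq YX key by blast
      moreover have "\<forall>x\<in>X. \<phi> x \<le> M" using le XC by blast
      ultimately show ?thesis using easy_dir[OF F lin M0] by blast
    qed
  qed
qed

theorem theorem4p7:
  fixes F :: "real set" and X :: "(real ^ 'n) set"
  assumes "real_subfield F"
    and "X \<subseteq> coords_in F"
    and "polyhedron (convex hull (X \<union> {0}))"
  shows "(\<forall>Y. Y \<subseteq> X \<and> Y \<noteq> {} \<longrightarrow>
            (positive_weak_face F Y X \<longleftrightarrow>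
              (\<exists>\<phi> :: real ^ 'n \<Rightarrow> real. \<exists>M. linear \<phi> \<and> M > 0 \<and>
                 (\<exists>x\<in>X. \<phi> x = M) \<and> (\<forall>x\<in>X. \<phi> x \<le> M) \<and>
                 Y = {x \<in> X. \<phi> x = M})))
       \<and> (0 \<in> rel_interior (convex hull X) \<longrightarrow>
            (\<forall>Y. Y \<subseteq> X \<longrightarrow>
              (positive_weak_face F Y X \<longleftrightarrow> Y \<noteq> X \<and> weak_face F Y X)))"
  using part1[OF assms] part2[OF assms] by blast


end
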